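(* Let $T$ be a singular weighted tree. Then $T^{\#}$ is a tree if and only if $T$ is a star.
   Context: A weighted tree has a nonzero real weight on each edge; it is singular if its adjacency matrix $A$ ($(i,j)$ entry equal to the weight of edge $v_iv_j$, or $0$ if no edge) is singular. $A^{\#}$ is the group inverse of $A$ (unique $X$ with $AXA=A$, $XAX=X$, $AX=XA$); $T^{\#}$ is the weighted graph on the vertex set of $T$ with $v_iv_j$ an edge iff $(A^{\#})_{ij}\neq 0$, weighted by that entry. *)

theory Defs
  imports "HOL-Analysis.Analysis"
begin

definition graph_connected :: "('v \<Rightarrow> 'v \<Rightarrow> bool) \<Rightarrow> bool" where
  "graph_connected E \<longleftrightarrow> (\<forall>x y. (x, y) \<in> {(a, b). E a b}\<^sup>*)"

definition is_cycle :: "('v \<Rightarrow> 'v \<Rightarrow> bool) \<Rightarrow> 'v list \<Rightarrow> bool" where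
  "is_cycle E vs \<longleftrightarrow> length vs \<ge> 3 \<and> distinct vs \<and>
     (\<forall>i. Suc i < length vs \<longrightarrow> E (vs ! i) (vs ! Suc i)) \<and> E (last vs) (hd vs)"

definition is_tree :: "('v \<Rightarrow> 'v \<Rightarrow> bool) \<Rightarrow> bool" where
  "is_tree E \<longleftrightarrow> graph_connected E \<and> (\<nexists>vs. is_cycle E vs)"

definition is_star :: "('v \<Rightarrow> 'v \<Rightarrow> bool) \<Rightarrow> bool" where
  "is_star E \<longleftrightarrow> is_tree E \<and> (\<exists>c. \<forall>v. v \<noteq> c \<longrightarrow> E c v)"

definition mat_graph :: "real ^ 'n ^ 'n \<Rightarrow> 'n \<Rightarrow> 'n \<Rightarrow> bool" where
  "mat_graph M i j \<longleftrightarrow> i \<noteq> j \<and> M $ i $ j \<noteq> 0"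

definition weighted_adj :: "real ^ 'n ^ 'n \<Rightarrow> bool" where
  "weighted_adj A \<longleftrightarrow> (\<forall>i j. A $ i $ j = A $ j $ i) \<and> (\<forall>i. A $ i $ i = 0)"

definition weighted_tree :: "real ^ 'n ^ 'n \<Rightarrow> bool" where
  "weighted_tree A \<longleftrightarrow> weighted_adj A \<and> is_tree (mat_graph A)"

definition group_inverse :: "real ^ 'n ^ 'n \<Rightarrow> real ^ 'n ^ 'n" where
  "group_inverse A = (THE X. A ** X ** A = A \<and> X ** A ** X = X \<and> A ** X = X ** A)"

end

theory Submission
  imports Defs
begin


lemma sym_inner:
  fixes A :: "real^'n^'n"
  assumes "transpose A = A"
  shows "(A *v x) \<bullet> y = x \<bullet> (A *v y)"
proof -
  have "(A *v x) = x v* A" using assms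
    by (metis transpose_matrix_vector)
  then show ?thesis by (simp add: dot_lmul_matrix)
qed

lemma decomp_exists:
  fixes A :: "real^'n^'n"
  assumes "transpose A = A"
  shows "\<exists>v z. A *v z = 0 \<and> x = A *v v + z"
proof -
  let ?S = "range (\<lambda>v. A *v v)"
  obtain y z where y: "y \<in> span ?S" and z: "\<And>w. w \<in> span ?S \<Longrightarrow> orthogonal z w" and xyz: "x = y + z"
    using orthogonal_subspace_decomp_exists[of ?S x] by blast
  have sub: "subspace ?S"
    using linear_subspace_image[OF matrix_vector_mul_linear subspace_UNIV] by (simp add: image_def)
  have sp: "span ?S = ?S" using sub by (simp only: span_eq_iff)
  have "y \<in> ?S" using y sp by simp
  then obtain v where v: "y = A *v v" by blast
  have "orthogonal z (A *v (A *v z))" using z sp by auto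
  then have "(A *v z) \<bullet> (A *v z) = 0"
    by (simp add: orthogonal_def sym_inner[OF assms])
  then have "A *v z = 0" by simp
  then show ?thesis using v xyz by blast
qed

lemma decomp_unique:
  fixes A :: "real^'n^'n"
  assumes "transpose A = A" "A *v z = 0" "A *v z' = 0" "A *v v + z = A *v v' + z'"
  shows "z = z'"
proof -
  have e: "A *v (v - v') = z' - z" using assms(4)
    by (simp add: matrix_vector_mult_diff_distrib algebra_simps)
  have "(z' - z) \<bullet> (z' - z) = (A *v (v - v')) \<bullet> (z' - z)" using e by simp
  also have "\<dots> = (v - v') \<bullet> (A *v (z' - z))" by (rule sym_inner[OF assms(1)])
  also have "\<dots> = 0" using assms(2,3) by (simp add: matrix_vector_mult_diff_distrib)
  finally show ?thesis by simp
qed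

lemma gi_exists:
  fixes A :: "real^'n^'n"
  assumes sym: "transpose A = A"
  shows "\<exists>X. A ** X ** A = A \<and> X ** A ** X = X \<and> A ** X = X ** A"
proof -
  define q where "q x = (SOME z. A *v z = 0 \<and> (\<exists>v. x = A *v v + z))" for x :: "real^'n"
  have q: "A *v q x = 0 \<and> (\<exists>v. x = A *v v + q x)" for x
    unfolding q_def by (rule someI_ex) (use decomp_exists[OF sym] in blast)
  have qu: "q x = z" if "A *v z = 0" "x = A *v v + z" for x z v
  proof -
    obtain v' where v': "x = A *v v' + q x" using q by blast
    show ?thesis using decomp_unique[OF sym, of "q x" z v' v] q that v' by auto
  qed
  have lin: "linear q"
  proof (rule linearI)
    fix x y
    obtain v where v: "x = A *v v + q x" using q by blast
    obtain w where w: "y = A *v w + q y" using q by blast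
    show "q (x + y) = q x + q y"
      by (rule qu[where v="v + w"]) (use q v w in \<open>auto simp: matrix_vector_right_distrib algebra_simps\<close>)
  next
    fix c :: real and x
    obtain v where v: "x = A *v v + q x" using q by blast
    show "q (c *\<^sub>R x) = c *\<^sub>R q x"
    proof (rule qu[where v="c *\<^sub>R v"])
      show "A *v (c *\<^sub>R q x) = 0" using q by (simp add: matrix_vector_mult_scaleR)
      have "c *\<^sub>R x = c *\<^sub>R (A *v v + q x)" using v by simp
      then show "c *\<^sub>R x = A *v (c *\<^sub>R v) + c *\<^sub>R q x"
        by (simp add: matrix_vector_mult_scaleR scaleR_add_right)
    qed
  qed
  define Q where "Q = matrix q"
  have Qv: "Q *v x = q x" for x
    unfolding Q_def using matrix_vector_mul(2)[OF lin] by metis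
  have AQ: "A *v (Q *v x) = 0" for x using q Qv by simp
  have QA: "Q *v (A *v x) = 0" for x unfolding Qv by (rule qu[of _ _ x]) auto
  have QQ: "Q *v (Q *v x) = Q *v x" for x unfolding Qv by (rule qu[of _ _ 0]) (use q in auto)
  define M where "M = A + Q"
  have Mv: "M *v x = A *v x + Q *v x" for x unfolding M_def by (simp add: matrix_vector_mult_add_rdistrib)
  have "\<forall>x. M *v x = 0 \<longrightarrow> x = 0"
  proof (intro allI impI)
    fix x assume "M *v x = 0"
    then have e: "A *v x + Q *v x = 0" using Mv by simp
    have "Q *v (A *v x + Q *v x) = Q *v x" using QA QQ by (simp add: matrix_vector_right_distrib)
    then have qx: "Q *v x = 0" using e by simp
    then have ax: "A *v x = 0" using e by simp
    have "Q *v x = x" unfolding Qv by (rule qu[of _ _ 0]) (use ax in auto)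
    then show "x = 0" using qx by simp
  qed
  then obtain N where NM: "N ** M = mat 1" using matrix_left_invertible_ker by blast
  then have MN: "M ** N = mat 1" using matrix_left_right_inverse by blast
  have NMv: "N *v (M *v x) = x" for x using NM by (simp add: matrix_vector_mul_assoc)
  have MNv: "M *v (N *v x) = x" for x using MN by (simp add: matrix_vector_mul_assoc)
  have NQ: "N *v (Q *v x) = Q *v x" for x
  proof -
    have "M *v (Q *v x) = Q *v x" using Mv AQ QQ by simp
    then show ?thesis using NMv by metis
  qed
  have QN: "Q *v (N *v x) = Q *v x" for x
  proof -
    have "Q *v x = Q *v (M *v (N *v x))" using MNv by simp
    also have "\<dots> = Q *v (N *v x)" using Mv QA QQ by (simp add: matrix_vector_right_distrib)
    finally show ?thesis by simp
  qed
  have AN: "A *v (N *v x) = x - Q *v x" for x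
    using MNv[of x] Mv[of "N *v x"] QN[of x] by (simp add: algebra_simps)
  have NA: "N *v (A *v x) = x - Q *v x" for x
  proof -
    have "A *v x = M *v x - Q *v x" using Mv by simp
    then have "N *v (A *v x) = N *v (M *v x) - N *v (Q *v x)" by (simp add: matrix_vector_mult_diff_distrib)
    then show ?thesis using NMv NQ by simp
  qed
  define X where "X = N - Q"
  have Xv: "X *v x = N *v x - Q *v x" for x unfolding X_def by (simp add: matrix_vector_mult_diff_rdistrib)
  have AX: "A *v (X *v x) = x - Q *v x" for x using AN AQ Xv by (simp add: matrix_vector_mult_diff_distrib)
  have XA: "X *v (A *v x) = x - Q *v x" for x using NA QA Xv by simp
  have e1: "A ** X ** A = A"
    unfolding matrix_eq by (simp add: matrix_vector_mul_assoc[symmetric] XA AQ matrix_vector_mult_diff_distrib)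
  have XQ: "X *v (Q *v x) = 0" for x using Xv NQ QQ by simp
  have e2: "X ** A ** X = X"
    unfolding matrix_eq by (simp add: matrix_vector_mul_assoc[symmetric] AX XQ matrix_vector_mult_diff_distrib)
  have e3: "A ** X = X ** A"
    unfolding matrix_eq by (simp add: matrix_vector_mul_assoc[symmetric] AX XA)
  show ?thesis using e1 e2 e3 by blast
qed

lemma gi_unique:
  fixes A X Y :: "real^'n^'n"
  assumes x1: "A ** X ** A = A" and x2: "X ** A ** X = X" and x3: "A ** X = X ** A"
    and y1: "A ** Y ** A = A" and y2: "Y ** A ** Y = Y" and y3: "A ** Y = Y ** A"
  shows "X = Y"
proof -
  have XA: "X ** A = A ** Y"
  proof -
    have "X ** A = X ** (A ** Y ** A)" using y1 by simp
    also have "\<dots> = (X ** A) ** (Y ** A)" by (simp add: matrix_mul_assoc)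
    also have "\<dots> = (A ** X) ** (A ** Y)" using x3 y3 by simp
    also have "\<dots> = (A ** X ** A) ** Y" by (simp add: matrix_mul_assoc)
    also have "\<dots> = A ** Y" using x1 by simp
    finally show ?thesis .
  qed
  have "X = X ** A ** X" using x2 by simp
  also have "\<dots> = (Y ** A) ** X" using XA y3 by simp
  also have "\<dots> = Y ** (X ** A)" using x3 by (metis matrix_mul_assoc)
  also have "\<dots> = Y ** (A ** Y)" using XA by simp
  also have "\<dots> = Y" using y2 by (simp add: matrix_mul_assoc)
  finally show ?thesis .
qed

lemma gi_eq:
  fixes A X :: "real^'n^'n"
  assumes "A ** X ** A = A" "X ** A ** X = X" "A ** X = X ** A"
  shows "group_inverse A = X"
  unfolding group_inverse_def
  by (rule the_equality) (use assms gi_unique in blast)+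

lemma gi_props:
  fixes A :: "real^'n^'n"
  assumes sym: "transpose A = A"
  defines "X \<equiv> group_inverse A"
  shows "A ** X ** A = A" "X ** A ** X = X" "A ** X = X ** A" "transpose X = X"
proof -
  obtain Y where Y: "A ** Y ** A = A" "Y ** A ** Y = Y" "A ** Y = Y ** A"
    using gi_exists[OF sym] by blast
  have XY: "X = Y" unfolding X_def by (rule gi_eq[OF Y])
  show 1: "A ** X ** A = A" "X ** A ** X = X" "A ** X = X ** A" using Y XY by auto
  have "A ** transpose X ** A = transpose (A ** X ** A)"
    using sym by (simp add: matrix_transpose_mul matrix_mul_assoc)
  moreover have "transpose X ** A ** transpose X = transpose (X ** A ** X)"
    using sym by (simp add: matrix_transpose_mul matrix_mul_assoc)
  moreover have "A ** transpose X = transpose (X ** A)"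
    using sym by (simp add: matrix_transpose_mul)
  moreover have "transpose X ** A = transpose (A ** X)"
    using sym by (simp add: matrix_transpose_mul)
  ultimately have a: "A ** transpose X ** A = A" "transpose X ** A ** transpose X = transpose X"
     "A ** transpose X = transpose X ** A"
    using 1 sym by metis+
  have "group_inverse A = transpose X" by (rule gi_eq[OF a])
  then show "transpose X = X" unfolding X_def by simp
qed



lemma walk_cycle:
  fixes E :: "'v::finite \<Rightarrow> 'v \<Rightarrow> bool"
  assumes irr: "\<And>x. \<not> E x x" and ab: "E a b" "a \<in> W" "b \<in> W"
    and ext: "\<And>p c. E p c \<Longrightarrow> p \<in> W \<Longrightarrow> c \<in> W \<Longrightarrow> \<exists>d. d \<in> W \<and> E c d \<and> d \<noteq> p"
  shows "\<exists>vs. is_cycle E vs"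
proof -
  define nxt where "nxt p c = (SOME d. d \<in> W \<and> E c d \<and> d \<noteq> p)" for p c
  have nxt: "nxt p c \<in> W \<and> E c (nxt p c) \<and> nxt p c \<noteq> p" if "E p c" "p \<in> W" "c \<in> W" for p c
    unfolding nxt_def by (rule someI_ex) (use ext that in blast)
  define g where "g k = ((\<lambda>(p, c). (c, nxt p c)) ^^ k) (a, b)" for k
  have g0: "g 0 = (a, b)" by (simp add: g_def)
  have gS: "g (Suc k) = (snd (g k), nxt (fst (g k)) (snd (g k)))" for k
    by (simp add: g_def case_prod_beta)
  have inv: "E (fst (g k)) (snd (g k)) \<and> fst (g k) \<in> W \<and> snd (g k) \<in> W" for k
  proof (induction k)
    case 0 then show ?case using ab g0 by simp
  next
    case (Suc k) then show ?case using nxt gS by simp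
  qed
  define v where "v k = fst (g k)" for k
  have vS: "snd (g k) = v (Suc k)" for k by (simp add: v_def gS)
  have Ev: "E (v k) (v (Suc k))" for k using inv[of k] vS v_def by simp
  have v2: "v (Suc (Suc k)) \<noteq> v k" for k
    using nxt[of "fst (g k)" "snd (g k)"] inv[of k] by (simp add: v_def gS)
  have "\<not> inj v"
  proof
    assume "inj v"
    then have "infinite (range v)" using finite_imageD by blast
    then show False by simp
  qed
  then have ex: "\<exists>j. \<exists>i<j. v i = v j" unfolding inj_def by (metis linorder_neqE_nat)
  define j where "j = (LEAST j. \<exists>i<j. v i = v j)"
  obtain i where ij: "i < j" "v i = v j" using LeastI_ex[OF ex] unfolding j_def by blast
  have minj: "v a' \<noteq> v b'" if "a' < b'" "b' < j" for a' b'
    using not_less_Least[of b' "\<lambda>j. \<exists>i<j. v i = v j"] that unfolding j_def by blast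
  define vs where "vs = map v [i..<j]"
  have len: "length vs = j - i" by (simp add: vs_def)
  have "j \<noteq> Suc i" using Ev[of i] ij irr by metis
  moreover have "j \<noteq> Suc (Suc i)" using v2[of i] ij by metis
  ultimately have len3: "length vs \<ge> 3" using len ij by linarith
  have dist: "distinct vs" unfolding vs_def distinct_conv_nth
  proof (intro allI impI)
    fix a' b' assume h: "a' < length (map v [i..<j])" "b' < length (map v [i..<j])" "a' \<noteq> b'"
    then have "i + a' < j" "i + b' < j" by auto
    then show "map v [i..<j] ! a' \<noteq> map v [i..<j] ! b'"
      using h minj[of "i + a'" "i + b'"] minj[of "i + b'" "i + a'"] by (auto simp: nat_neq_iff)
  qed
  have cons: "E (vs ! k) (vs ! Suc k)" if "Suc k < length vs" for k
    using that Ev[of "i + k"] by (simp add: vs_def len)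
  have "last vs = v (j - 1)" unfolding vs_def using ij by (simp add: last_map)
  moreover have "hd vs = v j" unfolding vs_def using ij by (simp add: hd_map upt_conv_Cons)
  moreover have "E (v (j - 1)) (v j)" using Ev[of "j - 1"] ij by simp
  ultimately have "E (last vs) (hd vs)" by simp
  then have "is_cycle E vs" unfolding is_cycle_def using len3 dist cons by blast
  then show ?thesis by blast
qed

lemma cycle3:
  assumes "a \<noteq> b" "a \<noteq> c" "b \<noteq> c" "E a b" "E b c" "E c a"
  shows "is_cycle E [a, b, c]"
proof -
  have "E ([a, b, c] ! i) ([a, b, c] ! Suc i)" if "Suc i < 3" for i
  proof -
    have "i = 0 \<or> i = 1" using that by auto
    then show ?thesis using assms by auto
  qed
  then show ?thesis using assms unfolding is_cycle_def by auto
qed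

lemma cycle4:
  assumes "distinct [a, b, c, d]" "E a b" "E b c" "E c d" "E d a"
  shows "is_cycle E [a, b, c, d]"
proof -
  have "E ([a, b, c, d] ! i) ([a, b, c, d] ! Suc i)" if "Suc i < 4" for i
  proof -
    have "i = 0 \<or> i = 1 \<or> i = 2" using that by auto
    then show ?thesis using assms by (auto simp: numeral_2_eq_2)
  qed
  then show ?thesis using assms unfolding is_cycle_def by auto
qed



lemma scaleR_mat_vec: "((t::real) *\<^sub>R (A::real^'n^'m)) *v x = t *\<^sub>R (A *v x)"
  by (simp add: vec_eq_iff matrix_vector_mult_def sum_distrib_left mult.assoc)

lemma wadj_transpose: "weighted_adj A \<Longrightarrow> transpose A = A"
  unfolding weighted_adj_def transpose_def by (simp add: vec_eq_iff)

lemma star_cube: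
  fixes A :: "real^'n^'n"
  assumes sym: "\<And>i j. A$i$j = A$j$i" and diag: "\<And>i. A$i$i = 0"
    and pat: "\<And>i j. i \<noteq> c \<Longrightarrow> j \<noteq> c \<Longrightarrow> A$i$j = 0"
  defines "s \<equiv> (\<Sum>k\<in>UNIV. (A$c$k)\<^sup>2)"
  shows "A *v (A *v (A *v x)) = s *\<^sub>R (A *v x)"
proof -
  have L: "(A *v y)$i = A$i$c * y$c" if "i \<noteq> c" for i y
  proof -
    have "(A *v y)$i = (\<Sum>k\<in>UNIV. A$i$k * y$k)" by (simp add: matrix_vector_mult_def)
    also have "\<dots> = (\<Sum>k\<in>UNIV. if k = c then A$i$c * y$c else 0)"
      by (rule sum.cong) (use pat that in auto)
    finally show ?thesis by simp
  qed
  have F: "(A *v (A *v v))$c = s * v$c" for v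
  proof -
    have "(A *v (A *v v))$c = (\<Sum>k\<in>UNIV. A$c$k * (A *v v)$k)" by (simp add: matrix_vector_mult_def)
    also have "\<dots> = (\<Sum>k\<in>UNIV. (A$c$k)\<^sup>2 * v$c)"
    proof (rule sum.cong)
      fix k show "A$c$k * (A *v v)$k = (A$c$k)\<^sup>2 * v$c"
        using L[of k v] sym[of c k] diag[of c] by (cases "k = c") (auto simp: power2_eq_square)
    qed simp
    finally show ?thesis by (simp add: s_def sum_distrib_right)
  qed
  show ?thesis
  proof (subst vec_eq_iff, intro allI)
    fix i show "(A *v (A *v (A *v x)))$i = (s *\<^sub>R (A *v x))$i"
    proof (cases "i = c")
      case True then show ?thesis using F[of "A *v x"] by simp
    next
      case False then show ?thesis using L[of i] F[of x] by simp
    qed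
  qed
qed

lemma star_dir:
  fixes A :: "real^'n^'n"
  assumes wt: "weighted_tree A" and st: "is_star (mat_graph A)"
  shows "is_tree (mat_graph (group_inverse A))"
proof -
  have wa: "weighted_adj A" and tr: "is_tree (mat_graph A)" using wt by (auto simp: weighted_tree_def)
  have sym: "\<And>i j. A$i$j = A$j$i" and diag: "\<And>i. A$i$i = 0" using wa by (auto simp: weighted_adj_def)
  obtain c where c: "\<And>v. v \<noteq> c \<Longrightarrow> A$c$v \<noteq> 0" using st by (auto simp: is_star_def mat_graph_def)
  have pat: "A$i$j = 0" if "i \<noteq> c" "j \<noteq> c" for i j
  proof (rule ccontr)
    assume nz: "A$i$j \<noteq> 0"
    then have "i \<noteq> j" using diag by auto
    then have "is_cycle (mat_graph A) [c, i, j]"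
      using that nz c[of i] c[of j] sym[of j c] by (intro cycle3) (auto simp: mat_graph_def)
    then show False using tr by (auto simp: is_tree_def)
  qed
  define s where "s = (\<Sum>k\<in>UNIV. (A$c$k)\<^sup>2)"
  have cube: "A *v (A *v (A *v x)) = s *\<^sub>R (A *v x)" for x
    unfolding s_def by (rule star_cube[OF sym diag pat])
  define X where "X = (1 / s) *\<^sub>R A"
  show ?thesis
  proof (cases "s = 0")
    case True
    then have "A$c$k = 0" for k using s_def by (simp add: sum_nonneg_eq_0_iff)
    then have A0: "A$i$j = 0" for i j using pat sym by (metis)
    then have "A = 0" by (simp add: vec_eq_iff)
    then have "group_inverse A = 0" by (intro gi_eq) auto
    then show ?thesis using tr \<open>A = 0\<close> by simp
  next
    case False
    have e1: "A ** X ** A = A" unfolding matrix_eq X_def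
      using False by (simp add: matrix_vector_mul_assoc[symmetric] scaleR_mat_vec matrix_vector_mult_scaleR cube)
    have e2: "X ** A ** X = X" unfolding matrix_eq X_def
      using False by (simp add: matrix_vector_mul_assoc[symmetric] scaleR_mat_vec matrix_vector_mult_scaleR cube)
    have e3: "A ** X = X ** A" unfolding matrix_eq X_def
      by (simp add: matrix_vector_mul_assoc[symmetric] scaleR_mat_vec matrix_vector_mult_scaleR)
    have "group_inverse A = X" by (rule gi_eq[OF e1 e2 e3])
    moreover have "mat_graph X = mat_graph A"
      using False by (auto simp: X_def mat_graph_def fun_eq_iff)
    ultimately show ?thesis using tr by simp
  qed
qed



lemma sum_only:
  fixes f :: "'a::finite \<Rightarrow> real"
  assumes "\<And>k. k \<noteq> p \<Longrightarrow> f k = 0"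
  shows "(\<Sum>k\<in>UNIV. f k) = f p"
proof -
  have "(\<Sum>k\<in>UNIV. f k) = (\<Sum>k\<in>UNIV. if k = p then f p else 0)"
    by (rule sum.cong) (use assms in auto)
  then show ?thesis by simp
qed

lemma sum_two:
  fixes f :: "'a::finite \<Rightarrow> real"
  assumes "(\<Sum>k\<in>UNIV. f k) = 0" "f p \<noteq> 0"
  shows "\<exists>k. k \<noteq> p \<and> f k \<noteq> 0"
  using sum_only[of p f] assms by auto

lemma sumsq_zero:
  fixes f :: "'a::finite \<Rightarrow> real"
  assumes "(\<Sum>k\<in>UNIV. (f k)\<^sup>2) = 0"
  shows "f k = 0"
proof -
  have "\<forall>k\<in>UNIV. (f k)\<^sup>2 = 0" using assms by (subst (asm) sum_nonneg_eq_0_iff) auto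
  then show ?thesis by simp
qed

lemma has_nb:
  assumes "graph_connected E" "x \<noteq> y"
  shows "\<exists>z. E x z"
proof -
  have "(x, y) \<in> {(a, b). E a b}\<^sup>*" using assms(1) by (simp add: graph_connected_def)
  then show ?thesis using assms(2) by (cases rule: converse_rtranclE) auto
qed

lemma leaf_exists:
  fixes A :: "real^'n^'n"
  assumes sym: "\<And>i j. A$i$j = A$j$i" and diag: "\<And>i. A$i$i = 0"
    and tr: "is_tree (mat_graph A)" and nb: "\<And>x. \<exists>y. mat_graph A x y"
    and Az: "A *v z = 0" and z0: "z \<noteq> 0"
  shows "\<exists>l u. z$l \<noteq> 0 \<and> (\<forall>k. mat_graph A l k \<longleftrightarrow> k = u)"
proof (rule ccontr)
  assume noleaf: "\<not> ?thesis"
  let ?E = "mat_graph A"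
  have Esym: "?E x y \<longleftrightarrow> ?E y x" for x y using sym by (auto simp: mat_graph_def)
  define W where "W = {x. z$x \<noteq> 0 \<or> (\<exists>s. z$s \<noteq> 0 \<and> ?E x s)}"
  obtain a where a: "z$a \<noteq> 0" using z0 by (auto simp: vec_eq_iff)
  obtain b where b: "?E a b" using nb by blast
  have aW: "a \<in> W" "b \<in> W" using a b Esym unfolding W_def by blast+
  have ext: "\<exists>d. d \<in> W \<and> ?E c d \<and> d \<noteq> p" if pc: "?E p c" "p \<in> W" "c \<in> W" for p c
  proof (cases "z$c = 0")
    case False
    have "\<not> (\<forall>k. ?E c k \<longleftrightarrow> k = p)" using noleaf False by blast
    then obtain d where d: "?E c d" "d \<noteq> p" using pc(1) Esym by blast
    then have "d \<in> W" using False Esym unfolding W_def by blast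
    then show ?thesis using d by blast
  next
    case True
    then obtain s where s: "z$s \<noteq> 0" "?E c s" using pc(3) unfolding W_def by blast
    have sum0: "(\<Sum>k\<in>UNIV. A$c$k * z$k) = 0"
      using Az by (simp add: vec_eq_iff matrix_vector_mult_def)
    have "\<exists>d. d \<noteq> p \<and> A$c$d * z$d \<noteq> 0"
    proof (rule ccontr)
      assume nt: "\<not> (\<exists>d. d \<noteq> p \<and> A$c$d * z$d \<noteq> 0)"
      then have "(\<Sum>k\<in>UNIV. A$c$k * z$k) = A$c$p * z$p" by (intro sum_only) auto
      then have "A$c$p * z$p = 0" using sum0 by simp
      moreover have "A$c$p \<noteq> 0" using pc(1) sym by (auto simp: mat_graph_def)
      ultimately have "z$p = 0" by simp
      then have "s \<noteq> p" using s by auto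
      then have "A$c$s * z$s = 0" using nt by blast
      then show False using s by (auto simp: mat_graph_def)
    qed
    then obtain d where d: "d \<noteq> p" "A$c$d \<noteq> 0" "z$d \<noteq> 0" by auto
    have "d \<noteq> c" using d diag by auto
    then have "?E c d" using d by (simp add: mat_graph_def)
    moreover have "d \<in> W" using d unfolding W_def by blast
    ultimately show ?thesis using d by blast
  qed
  have "\<exists>vs. is_cycle ?E vs"
    by (rule walk_cycle[of ?E a b W]) (use aW b ext in \<open>auto simp: mat_graph_def\<close>)
  then show False using tr by (simp add: is_tree_def)
qed

lemma main_dir:
  fixes A :: "real^'n^'n"
  assumes wt: "weighted_tree A" and sing: "\<not> invertible A"
    and trX: "is_tree (mat_graph (group_inverse A))"
  shows "is_star (mat_graph A)"
proof -
  have wa: "weighted_adj A" and tr: "is_tree (mat_graph A)" using wt by (auto simp: weighted_tree_def)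
  have sym: "\<And>i j. A$i$j = A$j$i" and diag: "\<And>i. A$i$i = 0" using wa by (auto simp: weighted_adj_def)
  have tA: "transpose A = A" by (rule wadj_transpose[OF wa])
  define X where "X = group_inverse A"
  note gp = gi_props[OF tA, folded X_def]
  have Xsym: "X$i$j = X$j$i" for i j using gp(4) by (metis transpose_def vec_lambda_beta)
  let ?E = "mat_graph A"
  let ?F = "mat_graph X"
  have trF: "is_tree ?F" using trX X_def by simp
  have Fsym: "?F x y \<longleftrightarrow> ?F y x" for x y using Xsym by (auto simp: mat_graph_def)
  have Esym: "?E x y \<longleftrightarrow> ?E y x" for x y using sym by (auto simp: mat_graph_def)
  have noF3: "\<not> (?F a b \<and> ?F b c \<and> ?F c a)" for a b c
  proof
    assume h: "?F a b \<and> ?F b c \<and> ?F c a"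
    then have "a \<noteq> b" "b \<noteq> c" "c \<noteq> a" by (auto simp: mat_graph_def)
    then have "is_cycle ?F [a, b, c]" using h by (intro cycle3) auto
    then show False using trF by (simp add: is_tree_def)
  qed
  show ?thesis
  proof (cases "\<exists>x y. x \<noteq> (y::'n)")
    case False
    then show ?thesis using tr by (auto simp: is_star_def)
  next
    case True
    then obtain x0 y0 :: 'n where "x0 \<noteq> y0" by blast
    have nb: "\<exists>y. ?E x y" for x
    proof -
      obtain y where "x \<noteq> y" using \<open>x0 \<noteq> y0\<close> by metis
      then show ?thesis using has_nb tr by (auto simp: is_tree_def)
    qed
    obtain z where z: "A *v z = 0" "z \<noteq> 0"
      using sing matrix_left_invertible_ker[of A] invertible_left_inverse[of A] by blast
    obtain l u where lz: "z$l \<noteq> 0" and leaf: "\<And>k. ?E l k \<longleftrightarrow> k = u"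
      using leaf_exists[OF sym diag tr nb z] by blast
    have Alu: "A$l$u \<noteq> 0" and lu: "l \<noteq> u" using leaf[of u] by (auto simp: mat_graph_def)
    have Alk: "A$l$k = 0" if "k \<noteq> u" for k
      using leaf[of k] that diag[of l] by (cases "k = l") (auto simp: mat_graph_def)
    have kerU: "y$u = 0" if "A *v y = 0" for y
    proof -
      have "(A *v y)$l = (\<Sum>k\<in>UNIV. A$l$k * y$k)" by (simp add: matrix_vector_mult_def)
      also have "\<dots> = A$l$u * y$u" by (rule sum_only) (use Alk in auto)
      finally show ?thesis using that Alu by simp
    qed
    define P where "P = A ** X"
    have Pij: "P$i$j = (\<Sum>k\<in>UNIV. A$i$k * X$k$j)" for i j by (simp add: P_def matrix_matrix_mult_def)
    have Psym: "P$i$j = P$j$i" for i j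
    proof -
      have "transpose P = P" unfolding P_def using gp(3,4) tA by (simp add: matrix_transpose_mul)
      then show ?thesis by (metis transpose_def vec_lambda_beta)
    qed
    have PP: "P ** P = P" unfolding P_def using gp(1) by (metis matrix_mul_assoc)
    have PA: "P ** A = A" unfolding P_def using gp(1) by simp
    have AP: "A ** P = A" unfolding P_def using gp(1,3) by (metis matrix_mul_assoc)
    have XP: "X ** P = X" unfolding P_def using gp(2) by (metis matrix_mul_assoc)
    have PXA: "P = X ** A" unfolding P_def using gp(3) by simp
    have Pdiag: "P$i$i = (\<Sum>k\<in>UNIV. (P$i$k)\<^sup>2)" for i
    proof -
      have "P$i$i = (P ** P)$i$i" using PP by simp
      also have "\<dots> = (\<Sum>k\<in>UNIV. (P$i$k)\<^sup>2)"
        by (simp add: matrix_matrix_mult_def power2_eq_square Psym[of _ i])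
      finally show ?thesis .
    qed
    have rowzero: "A$i$j = 0" if "P$i$i = 0" for i j
    proof -
      have "P$i$k = 0" for k using sumsq_zero[of "\<lambda>k. P$i$k"] that Pdiag[of i] by simp
      then have "(P ** A)$i$j = 0" by (simp add: matrix_matrix_mult_def)
      then show ?thesis using PA by simp
    qed
    have Pnz: "P$i$i \<noteq> 0" for i
    proof
      assume "P$i$i = 0"
      obtain j where "?E i j" using nb by blast
      then show False using rowzero[OF \<open>P$i$i = 0\<close>, of j] by (simp add: mat_graph_def)
    qed
    have rowU: "X$u$j = P$l$j / A$l$u" for j
    proof -
      have "P$l$j = (\<Sum>k\<in>UNIV. A$l$k * X$k$j)" by (rule Pij)
      also have "\<dots> = A$l$u * X$u$j" by (rule sum_only) (use Alk in auto)
      finally show ?thesis using Alu by simp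
    qed
    define e :: "real^'n" where "e = axis l 1"
    define z0 where "z0 = e - P *v e"
    have Me: "(M *v e)$j = M$j$l" for M :: "real^'n^'n" and j
      by (simp add: e_def matrix_vector_mult_basis column_def)
    have z0j: "z0$j = (if j = l then 1 else 0) - P$l$j" for j
      by (simp add: z0_def Me Psym[of j l]) (simp add: e_def axis_def)
    have Az0: "A *v z0 = 0"
      by (simp add: z0_def matrix_vector_mult_diff_distrib matrix_vector_mul_assoc AP)
    have Xz0: "X *v z0 = 0"
      by (simp add: z0_def matrix_vector_mult_diff_distrib matrix_vector_mul_assoc XP)
    have z0u: "z0$u = 0" by (rule kerU[OF Az0])
    have Pll1: "P$l$l \<noteq> 1"
    proof
      assume h: "P$l$l = 1"
      have "(\<Sum>k\<in>UNIV. (P$l$k)\<^sup>2) = (P$l$l)\<^sup>2 + (\<Sum>k\<in>UNIV - {l}. (P$l$k)\<^sup>2)"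
        by (simp add: sum.remove)
      then have "(\<Sum>k\<in>UNIV - {l}. (P$l$k)\<^sup>2) = 0" using h Pdiag[of l] by simp
      then have "\<forall>k\<in>UNIV - {l}. (P$l$k)\<^sup>2 = 0" by (subst (asm) sum_nonneg_eq_0_iff) auto
      then have Plk: "P$l$k = 0" if "k \<noteq> l" for k using that by simp
      have "(P *v z)$l = (\<Sum>k\<in>UNIV. P$l$k * z$k)" by (simp add: matrix_vector_mult_def)
      also have "\<dots> = P$l$l * z$l" by (rule sum_only) (use Plk in auto)
      finally have "(P *v z)$l = z$l" using h by simp
      moreover have "P *v z = 0" using z(1) by (simp add: PXA matrix_vector_mul_assoc[symmetric])
      ultimately show False using lz by simp
    qed
    have Fu: "?F u j \<longleftrightarrow> z0$j \<noteq> 0" for j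
    proof (cases "j = u")
      case True then show ?thesis using z0u by (simp add: mat_graph_def)
    next
      case False
      then show ?thesis using rowU[of j] z0j[of j] Alu Pnz[of l] Pll1 lu
        by (cases "j = l") (auto simp: mat_graph_def)
    qed
    have closed: "?F u v" if "?F u j" "?F j v" "v \<noteq> u" for j v
    proof (rule ccontr)
      assume nv: "\<not> ?F u v"
      then have z0v: "z0$v = 0" using Fu by simp
      have s0: "(\<Sum>k\<in>UNIV. X$v$k * z0$k) = 0"
        using Xz0 by (simp add: vec_eq_iff matrix_vector_mult_def)
      have "X$v$j * z0$j \<noteq> 0" using that Fu Fsym by (auto simp: mat_graph_def)
      then obtain j' where j': "j' \<noteq> j" "X$v$j' * z0$j' \<noteq> 0"
        using sum_two[OF s0] by blast
      have "j' \<noteq> v" using j' z0v by auto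
      then have Fvj': "?F v j'" using j' by (simp add: mat_graph_def)
      have Fuj': "?F u j'" using j' Fu by simp
      have "distinct [u, j, v, j']"
        using that j' \<open>j' \<noteq> v\<close> Fuj' by (auto simp: mat_graph_def)
      then have "is_cycle ?F [u, j, v, j']"
        using that Fvj' Fuj' Fsym by (intro cycle4) auto
      then show False using trF by (simp add: is_tree_def)
    qed
    have reach: "v = u \<or> ?F u v" if "(u, v) \<in> {(a, b). ?F a b}\<^sup>*" for v
      using that
    proof (induction rule: rtrancl_induct)
      case base then show ?case by simp
    next
      case (step y v)
      then show ?case using closed by (cases "v = u") auto
    qed
    have allF: "?F u v" if "v \<noteq> u" for v
      using reach[of v] trF that by (auto simp: is_tree_def graph_connected_def)
    have "?E u k" if "k \<noteq> u" for k
    proof -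
      have "P$k$k = (\<Sum>m\<in>UNIV. A$k$m * X$m$k)" by (rule Pij)
      also have "\<dots> = A$k$u * X$u$k"
      proof (rule sum_only)
        fix m assume "m \<noteq> u"
        show "A$k$m * X$m$k = 0"
        proof (cases "m = k")
          case True then show ?thesis using diag by simp
        next
          case False
          have "\<not> ?F m k" using noF3[of u m k] allF[OF \<open>m \<noteq> u\<close>] allF[OF that] Fsym by blast
          then show ?thesis using False by (simp add: mat_graph_def)
        qed
      qed
      finally have "A$k$u \<noteq> 0" using Pnz[of k] by auto
      then show ?thesis using that sym by (auto simp: mat_graph_def)
    qed
    then show ?thesis using tr by (auto simp: is_star_def)
  qed
qed


theorem lemma2p11:
  fixes A :: "real ^ 'n ^ 'n"
  assumes "weighted_tree A"
    and "\<not> invertible A"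
  shows "is_tree (mat_graph (group_inverse A)) \<longleftrightarrow> is_star (mat_graph A)"
  using main_dir[OF assms] star_dir[OF assms(1)] by blast

end
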